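(* Let $n\ge2$ and let $\beta\in D_n$ have restricted sequence $(b_n,\ldots,b_1)$. Let $1\le j\le 2n-1$ with $j\notin\{b_n-1,b_n,b_n+1\}$, and let $(b'_{n-1},\ldots,b'_1)$ be the restricted sequence of $\tau_j(\beta)\in D_{n-1}$. Then: (1) if $j<b_n-1$, then $b'_{n-1}=b_n-2$; (2) if $j>b_n+1$, then $b'_{n-1}\le b_n$.
   Context: $D_n$ is the set of non-crossing perfect matchings of $\{1,\ldots,2n\}$ (non-crossing $n$-chord diagrams), $D_0=\{\phi\}$. For $1\le k\le 2n+1$, $l_k:D_n\to D_{n+1}$: $l_k(\alpha)$ matches $k$ with $k+1$, old point $i$ becomes $i$ if $i<k$ and $i+2$ if $i\ge k$. For $1\le j\le 2n-1$, $\tau_j:D_n\to D_{n-1}$: if $j$ is matched with $j+1$, delete this pair; otherwise, if $p$ is the partner of $j$ and $p'$ the partner of $j+1$, delete the pairs $\{j,p\},\{j+1,p'\}$ and add the pair $\{p,p'\}$; then renumber the remaining $2n-2$ points order-preservingly to $\{1,\ldots,2n-2\}$. Restricted sequence of $\alpha\in D_n$: let $k_n$ be the smallest $k$ with $k$ matched to $k+1$; the sequence is $(k_n,k_{n-1},\ldots,k_1)$ where $(k_{n-1},\ldots,k_1)$ is the restricted sequence of $\alpha$ with that arc removed (empty for $\phi$). *)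

theory Defs
  imports Main
begin

text \<open>A chord diagram on points 1..2n is represented as a set of arcs (a,b) with a < b.\<close>

type_synonym chord_diagram = "(nat \<times> nat) set"

definition is_perfect_matching :: "nat \<Rightarrow> chord_diagram \<Rightarrow> bool" where
  "is_perfect_matching n M \<longleftrightarrow>
     (\<forall>(a,b)\<in>M. 1 \<le> a \<and> a < b \<and> b \<le> 2*n) \<and>
     (\<forall>i\<in>{1..2*n}. \<exists>!p. p \<in> M \<and> (fst p = i \<or> snd p = i))"

definition noncrossing :: "chord_diagram \<Rightarrow> bool" where
  "noncrossing M \<longleftrightarrow> (\<forall>(a,b)\<in>M. \<forall>(c,d)\<in>M. \<not> (a < c \<and> c < b \<and> b < d))"

definition D :: "nat \<Rightarrow> chord_diagram set" where
  "D n = {M. is_perfect_matching n M \<and> noncrossing M}"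

definition partner :: "chord_diagram \<Rightarrow> nat \<Rightarrow> nat" where
  "partner M i = (THE p. (i,p) \<in> M \<or> (p,i) \<in> M)"

definition renum :: "nat \<Rightarrow> nat \<Rightarrow> nat" where
  "renum j i = (if i < j then i else i - 2)"

definition tau :: "nat \<Rightarrow> chord_diagram \<Rightarrow> chord_diagram" where
  "tau j M =
     (let p = partner M j; p' = partner M (j+1);
          M' = {(a,b) \<in> M. a \<notin> {j, j+1} \<and> b \<notin> {j, j+1}}
               \<union> (if (j, j+1) \<in> M then {} else {(min p p', max p p')})
      in (\<lambda>(a,b). (renum j a, renum j b)) ` M')"

text \<open>Restricted sequence (k_n, ..., k_1) of a diagram in D_n. Removing the arc (k, k+1)
  and renumbering is exactly tau k.\<close>
fun rseq :: "nat \<Rightarrow> chord_diagram \<Rightarrow> nat list" where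
  "rseq 0 M = []"
| "rseq (Suc n) M = (let k = (LEAST k. (k, k+1) \<in> M) in k # rseq n (tau k M))"

end

theory Submission
  imports Defs
begin

lemma arc_bounds:
  assumes "M \<in> D n" "(a,c) \<in> M"
  shows "1 \<le> a" "a < c" "c \<le> 2*n"
  using assms unfolding D_def is_perfect_matching_def by fastforce+

lemma arc_uniq:
  assumes "M \<in> D n" "P1 \<in> M" "P2 \<in> M" "fst P1 = i \<or> snd P1 = i" "fst P2 = i \<or> snd P2 = i"
    "i \<in> {1..2*n}"
  shows "P1 = P2"
proof -
  have "\<exists>!p. p \<in> M \<and> (fst p = i \<or> snd p = i)"
    using assms(1,6) unfolding D_def is_perfect_matching_def by blast
  thus ?thesis using assms(2-5) by blast
qed

lemma arc_exists:
  assumes "M \<in> D n" "i \<in> {1..2*n}"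
  shows "\<exists>p. (i,p) \<in> M \<or> (p,i) \<in> M"
proof -
  have "\<exists>!p. p \<in> M \<and> (fst p = i \<or> snd p = i)"
    using assms unfolding D_def is_perfect_matching_def by blast
  then obtain P where "P \<in> M" "fst P = i \<or> snd P = i" by blast
  thus ?thesis by (cases P) auto
qed

lemma nc:
  assumes "M \<in> D n" "(a,b) \<in> M" "(c,d) \<in> M"
  shows "\<not> (a < c \<and> c < b \<and> b < d)"
  using assms unfolding D_def noncrossing_def by blast

lemma short_inside:
  assumes "M \<in> D n"
  shows "(a,c) \<in> M \<Longrightarrow> \<exists>k. a \<le> k \<and> k+1 \<le> c \<and> (k,k+1) \<in> M"
proof (induction "c - a" arbitrary: a c rule: less_induct)
  case less
  note ac = arc_bounds[OF assms less.prems]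
  show ?case
  proof (cases "c = a+1")
    case True thus ?thesis using less.prems by auto
  next
    case False
    hence lt: "a+1 < c" using ac by simp
    have "a+1 \<in> {1..2*n}" using ac lt by simp
    then obtain q where q: "(a+1,q) \<in> M \<or> (q,a+1) \<in> M" using arc_exists[OF assms] by blast
    show ?thesis
    proof (cases "(a+1,q) \<in> M")
      case True
      have "\<not> (c < q)" using nc[OF assms less.prems True] lt by simp
      moreover have "q \<noteq> c"
      proof
        assume "q = c"
        hence "(a+1,c) = (a,c)"
          using arc_uniq[OF assms True less.prems, of c] ac by auto
        thus False by simp
      qed
      ultimately have "q < c" by simp
      moreover have "a+1 < q" using arc_bounds[OF assms True] by simp
      ultimately obtain k where "a+1 \<le> k \<and> k+1 \<le> q \<and> (k,k+1) \<in> M"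
        using less.hyps[OF _ True] by fastforce
      thus ?thesis using \<open>q < c\<close> by (intro exI[of _ k]) auto
    next
      case False
      hence Q: "(q,a+1) \<in> M" using q by simp
      have "q < a+1" using arc_bounds[OF assms Q] by simp
      show ?thesis
      proof (cases "q = a")
        case True
        hence "(a,a+1) = (a,c)"
          using arc_uniq[OF assms Q less.prems, of a] ac True by auto
        thus ?thesis using lt by simp
      next
        case False
        hence "q < a" using \<open>q < a+1\<close> by simp
        thus ?thesis using nc[OF assms Q less.prems] lt by simp
      qed
    qed
  qed
qed

lemma short_exists:
  assumes "M \<in> D n" "n \<ge> 1"
  shows "\<exists>k. (k,k+1) \<in> M"
proof -
  have "(1::nat) \<in> {1..2*n}" using assms by simp
  then obtain p where "(1,p) \<in> M \<or> (p,1) \<in> M" using arc_exists[OF assms(1)] by blast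
  thus ?thesis using short_inside[OF assms(1)] by blast
qed

lemma right_ge:
  assumes "M \<in> D n" "(x,y) \<in> M"
  shows "(LEAST k. (k,k+1) \<in> M) + 1 \<le> y"
proof -
  obtain k where "x \<le> k \<and> k+1 \<le> y \<and> (k,k+1) \<in> M" using short_inside[OF assms] by blast
  moreover have "(LEAST k. (k,k+1) \<in> M) \<le> k" using calculation by (intro Least_le) blast
  ultimately show ?thesis by simp
qed

lemma partner_eq:
  assumes "M \<in> D n" "(j,p) \<in> M"
  shows "partner M j = p"
  unfolding partner_def
proof (rule the_equality)
  show "(j,p) \<in> M \<or> (p,j) \<in> M" using assms by simp
next
  fix q assume "(j,q) \<in> M \<or> (q,j) \<in> M"
  have jr: "j \<in> {1..2*n}" using arc_bounds[OF assms] by simp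
  show "q = p"
  proof (cases "(j,q) \<in> M")
    case True thus ?thesis using arc_uniq[OF assms(1) True assms(2) _ _ jr] by auto
  next
    case False
    hence "(q,j) \<in> M" using \<open>(j,q) \<in> M \<or> (q,j) \<in> M\<close> by simp
    hence "(q,j) = (j,p)" using arc_uniq[OF assms(1) _ assms(2) _ _ jr] by auto
    thus ?thesis using arc_bounds[OF assms] by simp
  qed
qed

theorem mainTheorem4:
  fixes n j :: nat and \<beta> :: chord_diagram
  assumes "n \<ge> 2" and "\<beta> \<in> D n"
    and "1 \<le> j" and "j \<le> 2*n - 1"
    and "j \<notin> {hd (rseq n \<beta>) - 1, hd (rseq n \<beta>), hd (rseq n \<beta>) + 1}"
  shows "(j < hd (rseq n \<beta>) - 1 \<longrightarrow> hd (rseq (n-1) (tau j \<beta>)) = hd (rseq n \<beta>) - 2)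
       \<and> (j > hd (rseq n \<beta>) + 1 \<longrightarrow> hd (rseq (n-1) (tau j \<beta>)) \<le> hd (rseq n \<beta>))"
proof -
  obtain m where n: "n = Suc m" using assms(1) by (cases n) auto
  obtain m' where m: "m = Suc m'" using assms(1) n by (cases m) auto
  define b where "b = (LEAST k. (k,k+1) \<in> \<beta>)"
  have hb: "hd (rseq n \<beta>) = b" unfolding b_def n by (simp add: Let_def)
  have ht: "hd (rseq (n-1) (tau j \<beta>)) = (LEAST k. (k,k+1) \<in> tau j \<beta>)"
    unfolding n m by (simp add: Let_def)
  have bb: "(b,b+1) \<in> \<beta>" unfolding b_def
    using short_exists[OF assms(2)] assms(1) by (metis LeastI_ex one_le_numeral order_trans)
  have rg: "\<And>x y. (x,y) \<in> \<beta> \<Longrightarrow> b+1 \<le> y" unfolding b_def using right_ge[OF assms(2)] by blast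
  define M' where "M' = {(a,c) \<in> \<beta>. a \<notin> {j, j+1} \<and> c \<notin> {j, j+1}}
               \<union> (if (j, j+1) \<in> \<beta> then {} else {(min (partner \<beta> j) (partner \<beta> (j+1)),
                    max (partner \<beta> j) (partner \<beta> (j+1)))})"
  have tau_eq: "tau j \<beta> = (\<lambda>(a,c). (renum j a, renum j c)) ` M'"
    unfolding tau_def M'_def Let_def by simp
  show ?thesis unfolding hb ht
  proof (intro conjI impI)
    assume j1: "j < b - 1"
    have in1: "(b-2, b-1) \<in> tau j \<beta>"
    proof -
      have "(b,b+1) \<in> M'" unfolding M'_def using bb j1 by auto
      moreover have "(b-2,b-1) = (renum j b, renum j (b+1))" using j1 unfolding renum_def by auto
      ultimately show ?thesis unfolding tau_eq by force
    qed
    have all: "b - 1 \<le> y" if xy: "(x,y) \<in> tau j \<beta>" for x y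
    proof -
      obtain a c where ac: "(a,c) \<in> M'" "x = renum j a" "y = renum j c"
      proof -
        from xy obtain P where "P \<in> M'" "(x,y) = (\<lambda>(a,c). (renum j a, renum j c)) P"
          unfolding tau_eq by blast
        moreover obtain a c where "P = (a,c)" by (cases P)
        ultimately show ?thesis using that[of a c] by simp
      qed
      have "b+1 \<le> c \<and> j+1 < c"
      proof (cases "(a,c) \<in> \<beta>")
        case True thus ?thesis using rg j1 by fastforce
      next
        case False
        hence nj: "(j,j+1) \<notin> \<beta>" and cm: "c = max (partner \<beta> j) (partner \<beta> (j+1))"
          using ac(1) unfolding M'_def by (auto split: if_splits)
        have "j \<in> {1..2*n}" using assms(3,4) by auto
        then obtain p where "(j,p) \<in> \<beta> \<or> (p,j) \<in> \<beta>" using arc_exists[OF assms(2)] by blast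
        moreover have "(p,j) \<notin> \<beta>" using rg j1 by fastforce
        ultimately have jp: "(j,p) \<in> \<beta>" by simp
        hence "partner \<beta> j = p" using partner_eq[OF assms(2)] by blast
        moreover have "b+1 \<le> p" using rg jp by blast
        ultimately show ?thesis using cm j1 by auto
      qed
      thus ?thesis using ac unfolding renum_def by auto
    qed
    show "(LEAST k. (k,k+1) \<in> tau j \<beta>) = b - 2"
    proof (rule Least_equality)
      show "(b-2, b-2+1) \<in> tau j \<beta>" using in1 j1 by (metis Suc_diff_Suc add_2_eq_Suc' Nat.add_0_right Suc_eq_plus1 diff_Suc_1 diff_diff_left less_imp_Suc_add nat_1_add_1 numeral_2_eq_2)
    next
      fix k assume "(k,k+1) \<in> tau j \<beta>"
      thus "b - 2 \<le> k" using all by fastforce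
    qed
  next
    assume j2: "b + 1 < j"
    have "(b,b+1) \<in> M'" unfolding M'_def using bb j2 by auto
    moreover have "(b,b+1) = (renum j b, renum j (b+1))" using j2 unfolding renum_def by auto
    ultimately have "(b,b+1) \<in> tau j \<beta>" unfolding tau_eq by force
    thus "(LEAST k. (k,k+1) \<in> tau j \<beta>) \<le> b" by (rule Least_le)
  qed
qed

end
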